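(* Assume the Lipschitz gradient assumption, $r_1>L_x$, $r_2>L_y$, and let $\{(x^t,y^t,z^t,v^t)\}$ be generated by DS-GDA. Then for every $t\ge0$, $$q(z^t)\ge q(z^{t+1})+\frac{r_1}{2}\langle z^t+z^{t+1}-2x(z^t,v(z^{t+1})),z^t-z^{t+1}\rangle.$$
   Context: Let $\mathcal X\subset\mathbb R^n$, $\mathcal Y\subset\mathbb R^d$ be nonempty convex compact sets and $f:\mathbb R^n\times\mathbb R^d\to\mathbb R$ continuously differentiable. Lipschitz gradient assumption: there are $L_x,L_y>0$ such that for all $x,x'\in\mathcal X$, $y,y'\in\mathcal Y$, $\|\nabla_x f(x,y)-\nabla_x f(x',y')\|\le L_x(\|x-x'\|+\|y-y'\|)$ and $\|\nabla_y f(x,y)-\nabla_y f(x',y')\|\le L_y(\|x-x'\|+\|y-y'\|)$. $F(x,y,z,v)=f(x,y)+\frac{r_1}{2}\|x-z\|^2-\frac{r_2}{2}\|y-v\|^2$; $h(x,z,v)=\max_{y\in\mathcal Y}F(x,y,z,v)$; $p(z,v)=\min_{x\in\mathcal X}h(x,z,v)$; $x(z,v)=\arg\min_{x\in\mathcal X}h(x,z,v)$; $q(z)=\max_{v\in\mathbb R^d}p(z,v)$ with $v(z)$ a maximizer (assumed to exist). DS-GDA: given $x^0,y^0,z^0,v^0$, stepsizes $c,\alpha>0$, $\beta,\mu\in(0,1)$, for $t\ge0$: $x^{t+1}=\mathrm{proj}_{\mathcal X}(x^t-c\nabla_xF(x^t,y^t,z^t,v^t))$; $y^{t+1}=\mathrm{proj}_{\mathcal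 Y}(y^t+\alpha\nabla_yF(x^{t+1},y^t,z^t,v^t))$; $z^{t+1}=z^t+\beta(x^{t+1}-z^t)$; $v^{t+1}=v^t+\mu(y^{t+1}-v^t)$. *)

theory Defs
  imports "HOL-Analysis.Analysis"
begin

definition Freg :: "('a::euclidean_space \<Rightarrow> 'b::euclidean_space \<Rightarrow> real) \<Rightarrow> real \<Rightarrow> real
    \<Rightarrow> 'a \<Rightarrow> 'b \<Rightarrow> 'a \<Rightarrow> 'b \<Rightarrow> real" where
  "Freg f r1 r2 x y z v = f x y + r1 / 2 * (norm (x - z))\<^sup>2 - r2 / 2 * (norm (y - v))\<^sup>2"

definition hfun :: "('a::euclidean_space \<Rightarrow> 'b::euclidean_space \<Rightarrow> real) \<Rightarrow> real \<Rightarrow> real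
    \<Rightarrow> 'b set \<Rightarrow> 'a \<Rightarrow> 'a \<Rightarrow> 'b \<Rightarrow> real" where
  "hfun f r1 r2 Y x z v = (SUP y\<in>Y. Freg f r1 r2 x y z v)"

definition pfun :: "('a::euclidean_space \<Rightarrow> 'b::euclidean_space \<Rightarrow> real) \<Rightarrow> real \<Rightarrow> real
    \<Rightarrow> 'a set \<Rightarrow> 'b set \<Rightarrow> 'a \<Rightarrow> 'b \<Rightarrow> real" where
  "pfun f r1 r2 X Y z v = (INF x\<in>X. hfun f r1 r2 Y x z v)"

text \<open>x(z,v) = argmin over x in X of h(x,z,v) (unique under r1 > L_x).\<close>
definition xarg :: "('a::euclidean_space \<Rightarrow> 'b::euclidean_space \<Rightarrow> real) \<Rightarrow> real \<Rightarrow> real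
    \<Rightarrow> 'a set \<Rightarrow> 'b set \<Rightarrow> 'a \<Rightarrow> 'b \<Rightarrow> 'a" where
  "xarg f r1 r2 X Y z v = (THE x. x \<in> X \<and> hfun f r1 r2 Y x z v = pfun f r1 r2 X Y z v)"

definition qfun :: "('a::euclidean_space \<Rightarrow> 'b::euclidean_space \<Rightarrow> real) \<Rightarrow> real \<Rightarrow> real
    \<Rightarrow> 'a set \<Rightarrow> 'b set \<Rightarrow> 'a \<Rightarrow> real" where
  "qfun f r1 r2 X Y z = (SUP v\<in>UNIV. pfun f r1 r2 X Y z v)"

end

theory Submission
  imports Defs
begin

lemma contF:
  fixes f :: "'a::euclidean_space \<Rightarrow> 'b::euclidean_space \<Rightarrow> real"
  assumes deriv: "\<And>x y. ((\<lambda>(u, w). f u w) has_derivative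
                    (\<lambda>(h, k). gx x y \<bullet> h + gy x y \<bullet> k)) (at (x, y))"
  shows "continuous_on UNIV (\<lambda>p. Freg f r1 r2 (fst p) (snd p) z v)"
proof -
  have "continuous_on UNIV (\<lambda>(u, w). f u w)"
    using deriv has_derivative_continuous continuous_at_imp_continuous_on
    by (metis surj_pair)
  hence c: "continuous_on UNIV (\<lambda>p. f (fst p) (snd p))"
    by (simp add: case_prod_beta')
  show ?thesis unfolding Freg_def
    by (intro continuous_intros c)
qed

lemma bddF:
  fixes f :: "'a::euclidean_space \<Rightarrow> 'b::euclidean_space \<Rightarrow> real"
  assumes deriv: "\<And>x y. ((\<lambda>(u, w). f u w) has_derivative
                    (\<lambda>(h, k). gx x y \<bullet> h + gy x y \<bullet> k)) (at (x, y))"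
    and "compact Y"
  shows "bdd_above ((\<lambda>y. Freg f r1 r2 x y z v) ` Y)"
proof -
  have "continuous_on UNIV ((\<lambda>p. Freg f r1 r2 (fst p) (snd p) z v) \<circ> (\<lambda>y. (x, y)))"
    by (intro continuous_on_compose continuous_intros continuous_on_subset[OF contF[OF deriv]] subset_UNIV)
  hence "continuous_on Y (\<lambda>y. Freg f r1 r2 x y z v)"
    by (simp add: o_def) (meson continuous_on_subset subset_UNIV)
  thus ?thesis using assms(2)
    by (meson bounded_imp_bdd_above compact_continuous_image compact_imp_bounded)
qed

lemma contH:
  fixes f :: "'a::euclidean_space \<Rightarrow> 'b::euclidean_space \<Rightarrow> real"
  assumes deriv: "\<And>x y. ((\<lambda>(u, w). f u w) has_derivative
                    (\<lambda>(h, k). gx x y \<bullet> h + gy x y \<bullet> k)) (at (x, y))"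
    and X: "compact X" and Y: "compact Y" "Y \<noteq> {}"
  shows "continuous_on X (\<lambda>x. hfun f r1 r2 Y x z v)"
proof -
  let ?G = "\<lambda>p. Freg f r1 r2 (fst p) (snd p) z v"
  have uc: "uniformly_continuous_on (X \<times> Y) ?G"
    by (intro compact_uniformly_continuous continuous_on_subset[OF contF[OF deriv]] compact_Times X Y) auto
  have bd: "\<And>x. bdd_above ((\<lambda>y. Freg f r1 r2 x y z v) ` Y)" by (rule bddF[OF deriv Y(1)])
  show ?thesis unfolding continuous_on_iff
  proof (intro ballI allI impI)
    fix x0 e assume x0: "x0 \<in> X" and e: "(0::real) < e"
    obtain d where d: "d > 0" and dd: "\<And>p p'. p \<in> X \<times> Y \<Longrightarrow> p' \<in> X \<times> Y \<Longrightarrow> dist p' p < d \<Longrightarrow> dist (?G p') (?G p) < e/2"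
      using uc e unfolding uniformly_continuous_on_def by (metis half_gt_zero)
    show "\<exists>d>0. \<forall>x'\<in>X. dist x' x0 < d \<longrightarrow> dist (hfun f r1 r2 Y x' z v) (hfun f r1 r2 Y x0 z v) < e"
    proof (intro exI conjI ballI impI, rule d)
      fix x' assume x': "x' \<in> X" "dist x' x0 < d"
      have near: "\<bar>Freg f r1 r2 x' y z v - Freg f r1 r2 x0 y z v\<bar> < e/2" if "y \<in> Y" for y
        using dd[of "(x0,y)" "(x',y)"] x0 x' that by (simp add: dist_Pair_Pair dist_real_def)
      have "hfun f r1 r2 Y x' z v \<le> hfun f r1 r2 Y x0 z v + e/2"
        unfolding hfun_def
      proof (rule cSUP_least[OF Y(2)])
        fix y assume y: "y \<in> Y"
        have "Freg f r1 r2 x0 y z v \<le> (SUP y\<in>Y. Freg f r1 r2 x0 y z v)"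
          by (rule cSUP_upper[OF y bd])
        thus "Freg f r1 r2 x' y z v \<le> (SUP y\<in>Y. Freg f r1 r2 x0 y z v) + e/2" using near[OF y] by linarith
      qed
      moreover have "hfun f r1 r2 Y x0 z v \<le> hfun f r1 r2 Y x' z v + e/2"
        unfolding hfun_def
      proof (rule cSUP_least[OF Y(2)])
        fix y assume y: "y \<in> Y"
        have "Freg f r1 r2 x' y z v \<le> (SUP y\<in>Y. Freg f r1 r2 x' y z v)"
          by (rule cSUP_upper[OF y bd])
        thus "Freg f r1 r2 x0 y z v \<le> (SUP y\<in>Y. Freg f r1 r2 x' y z v) + e/2" using near[OF y] by linarith
      qed
      ultimately show "dist (hfun f r1 r2 Y x' z v) (hfun f r1 r2 Y x0 z v) < e"
        using e by (simp add: dist_real_def abs_le_iff)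
    qed
  qed
qed

lemma midF:
  fixes f :: "'a::euclidean_space \<Rightarrow> 'b::euclidean_space \<Rightarrow> real"
  assumes deriv: "\<And>x y. ((\<lambda>(u, w). f u w) has_derivative
                    (\<lambda>(h, k). gx x y \<bullet> h + gy x y \<bullet> k)) (at (x, y))"
    and X: "convex X"
    and Lip_x: "\<And>x x' y y'. x \<in> X \<Longrightarrow> x' \<in> X \<Longrightarrow> y \<in> Y \<Longrightarrow> y' \<in> Y \<Longrightarrow>
                   norm (gx x y - gx x' y') \<le> Lx * (norm (x - x') + norm (y - y'))"
    and r1: "r1 > Lx"
    and x1: "x1 \<in> X" and x2: "x2 \<in> X" and y: "y \<in> Y"
  shows "Freg f r1 r2 ((1/2) *\<^sub>R (x1 + x2)) y z v \<le>
           (Freg f r1 r2 x1 y z v + Freg f r1 r2 x2 y z v) / 2 - (r1 - Lx) / 8 * (norm (x1 - x2))\<^sup>2"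
proof -
  define d where "d = x2 - x1"
  define a where "a = x1 - z"
  define \<kappa> where "\<kappa> = (r1 - Lx) * (norm d)\<^sup>2"
  define xs where "xs = (\<lambda>s::real. x1 + s *\<^sub>R d)"
  define \<phi> where "\<phi> = (\<lambda>s. f (xs s) y + r1/2 * ((norm a)\<^sup>2 + 2 * s * (a \<bullet> d) + s\<^sup>2 * (norm d)\<^sup>2)
                          - r2/2 * (norm (y - v))\<^sup>2)"
  define \<phi>' where "\<phi>' = (\<lambda>s. gx (xs s) y \<bullet> d + r1/2 * (2 * (a \<bullet> d) + 2 * s * (norm d)\<^sup>2))"
  define \<psi> where "\<psi> = (\<lambda>s. \<phi> s - \<kappa>/2 * s\<^sup>2)"
  define \<psi>' where "\<psi>' = (\<lambda>s. \<phi>' s - \<kappa> * s)"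
  have Feq: "Freg f r1 r2 (xs s) y z v = \<phi> s" for s
  proof -
    have "xs s - z = a + s *\<^sub>R d" by (simp add: xs_def a_def)
    moreover have "(norm (a + s *\<^sub>R d))\<^sup>2 = (norm a)\<^sup>2 + 2 * s * (a \<bullet> d) + s\<^sup>2 * (norm d)\<^sup>2"
      unfolding power2_norm_eq_inner by (simp add: inner_add_left inner_add_right inner_commute algebra_simps power2_eq_square)
    ultimately have "(norm (xs s - z))\<^sup>2 = (norm a)\<^sup>2 + 2 * s * (a \<bullet> d) + s\<^sup>2 * (norm d)\<^sup>2" by simp
    thus ?thesis by (simp add: Freg_def \<phi>_def)
  qed
  have xsX: "xs s \<in> X" if "s \<in> {0..1}" for s
  proof -
    have "xs s = (1 - s) *\<^sub>R x1 + s *\<^sub>R x2" by (simp add: xs_def d_def algebra_simps)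
    thus ?thesis using that X x1 x2 by (simp add: convex_alt)
  qed
  have dxs: "(xs has_derivative (\<lambda>s. s *\<^sub>R d)) (at s)" for s
    unfolding xs_def by (auto intro!: derivative_eq_intros)
  have dfx: "((\<lambda>s. f (xs s) y) has_real_derivative (gx (xs s) y \<bullet> d)) (at s)" for s
  proof -
    have "((\<lambda>s. (xs s, y)) has_derivative (\<lambda>s. (s *\<^sub>R d, 0))) (at s)"
      by (auto intro!: derivative_eq_intros dxs)
    from has_derivative_compose[OF this deriv[of "xs s" y]]
    have "((\<lambda>s. f (xs s) y) has_derivative (\<lambda>t. t * (gx (xs s) y \<bullet> d))) (at s)"
      by (simp add: o_def)
    moreover have "(\<lambda>t. t * (gx (xs s) y \<bullet> d)) = (*) (gx (xs s) y \<bullet> d)" by (auto simp: mult.commute)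
    ultimately show ?thesis by (simp add: has_field_derivative_def)
  qed
  have dphi: "(\<phi> has_real_derivative \<phi>' s) (at s)" for s
    unfolding \<phi>_def \<phi>'_def
    by (rule derivative_eq_intros dfx refl | simp)+
  have dpsi: "(\<psi> has_real_derivative \<psi>' s) (at s)" for s
    unfolding \<psi>_def \<psi>'_def
    by (rule derivative_eq_intros dphi refl | simp)+
  have mono: "\<psi>' s \<le> \<psi>' s'" if "s \<in> {0..1}" "s' \<in> {0..1}" "s \<le> s'" for s s'
  proof -
    have "norm (gx (xs s') y - gx (xs s) y) \<le> Lx * norm (xs s' - xs s)"
      using Lip_x[OF xsX[OF that(2)] xsX[OF that(1)] y y] by simp
    also have "xs s' - xs s = (s' - s) *\<^sub>R d" by (simp add: xs_def algebra_simps)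
    finally have n: "norm (gx (xs s') y - gx (xs s) y) \<le> Lx * ((s' - s) * norm d)"
      using that by simp
    have "\<bar>(gx (xs s') y - gx (xs s) y) \<bullet> d\<bar> \<le> norm (gx (xs s') y - gx (xs s) y) * norm d"
      by (rule Cauchy_Schwarz_ineq2)
    also have "\<dots> \<le> Lx * ((s' - s) * norm d) * norm d"
      by (rule mult_right_mono[OF n norm_ge_zero])
    finally have "gx (xs s') y \<bullet> d - gx (xs s) y \<bullet> d \<ge> - (Lx * (s' - s) * (norm d)\<^sup>2)"
      by (simp add: inner_diff_left power2_eq_square algebra_simps)
    thus ?thesis
      by (simp add: \<psi>'_def \<phi>'_def \<kappa>_def algebra_simps)
  qed
  have cvx: "convex_on {0..1} \<psi>"
    by (rule convex_on_realI[OF _ dpsi mono]) auto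
  have "\<psi> ((1 - 1/2) *\<^sub>R 0 + (1/2) *\<^sub>R 1) \<le> (1 - 1/2) * \<psi> 0 + (1/2) * \<psi> 1"
    by (rule convex_onD[OF cvx]) auto
  hence "\<phi> (1/2) \<le> (\<phi> 0 + \<phi> 1)/2 - \<kappa>/8"
    by (simp add: \<psi>_def power2_eq_square field_simps)
  moreover have "xs (1/2) = (1/2) *\<^sub>R (x1 + x2)" "xs 0 = x1" "xs 1 = x2"
    by (simp_all add: xs_def d_def algebra_simps, simp add: scaleR_add_left[symmetric])
  moreover have "(norm (x1 - x2))\<^sup>2 = (norm d)\<^sup>2" by (simp add: d_def norm_minus_commute)
  ultimately show ?thesis using Feq[of "1/2"] Feq[of 0] Feq[of 1] by (simp add: \<kappa>_def)
qed

lemma half_le: "(a::real) \<le> (b + c) / 2 - k \<Longrightarrow> b \<le> h \<Longrightarrow> c \<le> h \<Longrightarrow> a \<le> h - k"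
  by (simp add: field_simps)

lemma xarg_prop:
  fixes f :: "'a::euclidean_space \<Rightarrow> 'b::euclidean_space \<Rightarrow> real"
  assumes deriv: "\<And>x y. ((\<lambda>(u, w). f u w) has_derivative
                    (\<lambda>(h, k). gx x y \<bullet> h + gy x y \<bullet> k)) (at (x, y))"
    and X: "convex X" "compact X" "X \<noteq> {}"
    and Y: "compact Y" "Y \<noteq> {}"
    and Lip_x: "\<And>x x' y y'. x \<in> X \<Longrightarrow> x' \<in> X \<Longrightarrow> y \<in> Y \<Longrightarrow> y' \<in> Y \<Longrightarrow>
                   norm (gx x y - gx x' y') \<le> Lx * (norm (x - x') + norm (y - y'))"
    and r1: "r1 > Lx"
  shows "xarg f r1 r2 X Y z v \<in> X \<and> hfun f r1 r2 Y (xarg f r1 r2 X Y z v) z v = pfun f r1 r2 X Y z v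
         \<and> (\<forall>x\<in>X. pfun f r1 r2 X Y z v \<le> hfun f r1 r2 Y x z v)"
proof -
  let ?h = "\<lambda>x. hfun f r1 r2 Y x z v"
  obtain x0 where x0: "x0 \<in> X" and min: "\<And>x. x \<in> X \<Longrightarrow> ?h x0 \<le> ?h x"
    using continuous_attains_inf[OF X(2) X(3) contH[OF deriv X(2) Y]] by blast
  have p: "pfun f r1 r2 X Y z v = ?h x0"
    unfolding pfun_def by (rule cInf_eq_minimum) (use x0 min in auto)
  have bd: "\<And>x. bdd_above ((\<lambda>y. Freg f r1 r2 x y z v) ` Y)" by (rule bddF[OF deriv Y(1)])
  have uniq: "x = x0" if x: "x \<in> X" "?h x = pfun f r1 r2 X Y z v" for x
  proof (rule ccontr)
    assume ne: "x \<noteq> x0"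
    define m where "m = (1/2) *\<^sub>R (x + x0)"
    have mX: "m \<in> X"
    proof -
      have "m = (1/2) *\<^sub>R x + (1/2) *\<^sub>R x0" by (simp add: m_def algebra_simps)
      thus ?thesis using convexD[OF X(1) x(1) x0, of "1/2" "1/2"] by simp
    qed
    define \<kappa> where "\<kappa> = (r1 - Lx) / 8 * (norm (x - x0))\<^sup>2"
    have kpos: "\<kappa> > 0" using ne r1 by (simp add: \<kappa>_def)
    have "?h m \<le> ?h x0 - \<kappa>"
      unfolding hfun_def
    proof (rule cSUP_least[OF Y(2)])
      fix y assume y: "y \<in> Y"
      have a: "Freg f r1 r2 x y z v \<le> ?h x" unfolding hfun_def by (rule cSUP_upper[OF y bd])
      have b: "Freg f r1 r2 x0 y z v \<le> ?h x0" unfolding hfun_def by (rule cSUP_upper[OF y bd])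
      have "Freg f r1 r2 m y z v \<le> (Freg f r1 r2 x y z v + Freg f r1 r2 x0 y z v) / 2 - \<kappa>"
        unfolding m_def \<kappa>_def by (rule midF[OF deriv X(1) Lip_x r1 x(1) x0 y])
      moreover have "Freg f r1 r2 x y z v \<le> ?h x0" using a x(2) p by simp
      ultimately have "Freg f r1 r2 m y z v \<le> ?h x0 - \<kappa>"
        using b by (rule half_le)
      thus "Freg f r1 r2 m y z v \<le> (SUP y\<in>Y. Freg f r1 r2 x0 y z v) - \<kappa>"
        by (simp add: hfun_def)
    qed
    thus False using min[OF mX] kpos by linarith
  qed
  have "xarg f r1 r2 X Y z v = x0"
    unfolding xarg_def
  proof (rule the_equality)
    show "x0 \<in> X \<and> ?h x0 = pfun f r1 r2 X Y z v" using x0 p by simp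
  next
    fix x assume "x \<in> X \<and> ?h x = pfun f r1 r2 X Y z v"
    thus "x = x0" using uniq by blast
  qed
  thus ?thesis using x0 p min by auto
qed

lemma norm_diff_ident:
  fixes a b c :: "'a::real_inner"
  shows "(norm (c - a))\<^sup>2 - (norm (c - b))\<^sup>2 = (a + b - 2 *\<^sub>R c) \<bullet> (a - b)"
  unfolding power2_norm_eq_inner
  by (simp add: inner_add_left inner_add_right inner_diff_left inner_diff_right inner_commute algebra_simps)

theorem lemma7:
  fixes f :: "'a::euclidean_space \<Rightarrow> 'b::euclidean_space \<Rightarrow> real"
    and gx :: "'a \<Rightarrow> 'b \<Rightarrow> 'a" and gy :: "'a \<Rightarrow> 'b \<Rightarrow> 'b"
    and X :: "'a set" and Y :: "'b set"
    and Lx Ly r1 r2 c \<alpha> \<beta> \<mu> :: real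
    and vmax :: "'a \<Rightarrow> 'b"
    and xs zs :: "nat \<Rightarrow> 'a" and ys vs :: "nat \<Rightarrow> 'b"
    and t :: nat
  assumes X: "convex X" "compact X" "X \<noteq> {}"
      and Y: "convex Y" "compact Y" "Y \<noteq> {}"
      and deriv: "\<And>x y. ((\<lambda>(u, w). f u w) has_derivative
                    (\<lambda>(h, k). gx x y \<bullet> h + gy x y \<bullet> k)) (at (x, y))"
      and cont_gx: "continuous_on UNIV (\<lambda>(x, y). gx x y)"
      and cont_gy: "continuous_on UNIV (\<lambda>(x, y). gy x y)"
      and Lpos: "Lx > 0" "Ly > 0"
      and Lip_x: "\<And>x x' y y'. x \<in> X \<Longrightarrow> x' \<in> X \<Longrightarrow> y \<in> Y \<Longrightarrow> y' \<in> Y \<Longrightarrow>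
                   norm (gx x y - gx x' y') \<le> Lx * (norm (x - x') + norm (y - y'))"
      and Lip_y: "\<And>x x' y y'. x \<in> X \<Longrightarrow> x' \<in> X \<Longrightarrow> y \<in> Y \<Longrightarrow> y' \<in> Y \<Longrightarrow>
                   norm (gy x y - gy x' y') \<le> Ly * (norm (x - x') + norm (y - y'))"
      and r1: "r1 > Lx" and r2: "r2 > Ly"
      and vmax: "\<And>z w. pfun f r1 r2 X Y z w \<le> pfun f r1 r2 X Y z (vmax z)"
      and steps: "c > 0" "\<alpha> > 0" "0 < \<beta>" "\<beta> < 1" "0 < \<mu>" "\<mu> < 1"
      and x_upd: "\<And>s. xs (Suc s) = closest_point X
                   (xs s - c *\<^sub>R (gx (xs s) (ys s) + r1 *\<^sub>R (xs s - zs s)))"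
      and y_upd: "\<And>s. ys (Suc s) = closest_point Y
                   (ys s + \<alpha> *\<^sub>R (gy (xs (Suc s)) (ys s) - r2 *\<^sub>R (ys s - vs s)))"
      and z_upd: "\<And>s. zs (Suc s) = zs s + \<beta> *\<^sub>R (xs (Suc s) - zs s)"
      and v_upd: "\<And>s. vs (Suc s) = vs s + \<mu> *\<^sub>R (ys (Suc s) - vs s)"
  shows "qfun f r1 r2 X Y (zs t) \<ge> qfun f r1 r2 X Y (zs (Suc t))
           + r1 / 2 * ((zs t + zs (Suc t) - 2 *\<^sub>R xarg f r1 r2 X Y (zs t) (vmax (zs (Suc t))))
                        \<bullet> (zs t - zs (Suc t)))"
proof -
  define z0 where "z0 = zs t"
  define z1 where "z1 = zs (Suc t)"
  define v' where "v' = vmax z1"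
  define xa where "xa = xarg f r1 r2 X Y z0 v'"
  define W where "W = (z0 + z1 - 2 *\<^sub>R xa) \<bullet> (z0 - z1)"
  have q0: "qfun f r1 r2 X Y z0 = pfun f r1 r2 X Y z0 (vmax z0)"
    unfolding qfun_def by (rule cSup_eq_maximum) (use vmax in auto)
  have q1: "qfun f r1 r2 X Y z1 = pfun f r1 r2 X Y z1 v'"
    unfolding qfun_def v'_def by (rule cSup_eq_maximum) (use vmax in auto)
  note P0 = xarg_prop[OF deriv X Y(2,3) Lip_x r1, of r2 z0 v']
  note P1 = xarg_prop[OF deriv X Y(2,3) Lip_x r1, of r2 z1 v']
  have xaX: "xa \<in> X" and hxa: "hfun f r1 r2 Y xa z0 v' = pfun f r1 r2 X Y z0 v'"
    using P0 by (auto simp: xa_def)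
  have p1: "pfun f r1 r2 X Y z1 v' \<le> hfun f r1 r2 Y xa z1 v'" using P1 xaX by auto
  have bd: "\<And>x. bdd_above ((\<lambda>y. Freg f r1 r2 x y z0 v') ` Y)" by (rule bddF[OF deriv Y(2)])
  have h1: "hfun f r1 r2 Y xa z1 v' \<le> hfun f r1 r2 Y xa z0 v' - r1 / 2 * W"
    unfolding hfun_def
  proof (rule cSUP_least[OF Y(3)])
    fix y assume y: "y \<in> Y"
    have a: "Freg f r1 r2 xa y z0 v' \<le> (SUP y\<in>Y. Freg f r1 r2 xa y z0 v')" by (rule cSUP_upper[OF y bd])
    have "Freg f r1 r2 xa y z1 v' = Freg f r1 r2 xa y z0 v' - r1 / 2 * ((norm (xa - z0))\<^sup>2 - (norm (xa - z1))\<^sup>2)"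
      by (simp add: Freg_def algebra_simps)
    also have "(norm (xa - z0))\<^sup>2 - (norm (xa - z1))\<^sup>2 = W"
      unfolding W_def by (rule norm_diff_ident)
    finally show "Freg f r1 r2 xa y z1 v' \<le> (SUP y\<in>Y. Freg f r1 r2 xa y z0 v') - r1 / 2 * W"
      using a by linarith
  qed
  have "pfun f r1 r2 X Y z0 v' \<le> pfun f r1 r2 X Y z0 (vmax z0)" by (rule vmax)
  hence "qfun f r1 r2 X Y z0 \<ge> qfun f r1 r2 X Y z1 + r1 / 2 * W"
    using q0 q1 hxa p1 h1 by linarith
  thus ?thesis by (simp add: z0_def z1_def v'_def xa_def W_def)
qed

end
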